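(* Let $\mathcal{F}$ be a family of objects such that any subset of $n$ objects from $\mathcal{F}$ admits a unimax coloring with $\gamma_{\mathrm{um}}(n)$ colors, where $\gamma_{\mathrm{um}}$ is non-decreasing. Then one can maintain a conflict-free coloring of a set $S$ of objects from $\mathcal{F}$ under insertions such that the number of used colors is $O(\gamma_{\mathrm{um}}(n)\log^2 n)$ and the number of recolorings per insertion is at most $\lceil\log n\rceil$, where $n$ is the current number of objects in $S$.
   Context: The setting is abstract: either objects are regions in the plane and colorings are considered with respect to points, or objects are points and colorings are considered with respect to a fixed family of ranges. For a point (resp. range) $q$, let $S_q$ be the set of objects of $S$ in relation with $q$ (regions containing $q$, resp. points contained in $q$). A coloring of $S$ is conflict-free if for every $q$ with $S_q\neq\emptyset$ some object of $S_q$ has a color unique within $S_q$; it is unimax if, with colors being integers, the maximum color in $S_q$ is attained by exactly one object of $S_q$ whenever $S_q\ne\emptyset$. The number of recolorings of an insertion is the number of previously present objects whose color changes. *)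

theory Defs
  imports Complex_Main
begin

text \<open>Abstract setting: objects of type 'a, "witnesses" (points or ranges) of type 'q,
  and a relation R q s meaning object s is in relation with q.\<close>

definition rel_set :: "('q \<Rightarrow> 'a \<Rightarrow> bool) \<Rightarrow> 'a set \<Rightarrow> 'q \<Rightarrow> 'a set" where
  "rel_set R S q = {s \<in> S. R q s}"

definition conflict_free :: "('q \<Rightarrow> 'a \<Rightarrow> bool) \<Rightarrow> 'a set \<Rightarrow> ('a \<Rightarrow> 'c) \<Rightarrow> bool" where
  "conflict_free R S c \<longleftrightarrow>
     (\<forall>q. rel_set R S q \<noteq> {} \<longrightarrow>
        (\<exists>s\<in>rel_set R S q. \<forall>t\<in>rel_set R S q. t \<noteq> s \<longrightarrow> c t \<noteq> c s))"

definition unimax :: "('q \<Rightarrow> 'a \<Rightarrow> bool) \<Rightarrow> 'a set \<Rightarrow> ('a \<Rightarrow> int) \<Rightarrow> bool" where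
  "unimax R S c \<longleftrightarrow>
     (\<forall>q. rel_set R S q \<noteq> {} \<longrightarrow>
        (\<exists>!s. s \<in> rel_set R S q \<and> c s = Max (c ` rel_set R S q)))"

definition recolorings :: "'a list \<Rightarrow> ('a \<Rightarrow> 'c) \<Rightarrow> ('a \<Rightarrow> 'c) \<Rightarrow> nat" where
  "recolorings xs c c' = card {y \<in> set xs. c' y \<noteq> c y}"

end

theory Submission
  imports Defs "HOL-Library.Nat_Bijection"
begin


definition prec :: "(nat \<Rightarrow> int) \<Rightarrow> nat \<Rightarrow> nat \<Rightarrow> bool" where
  "prec u a b \<longleftrightarrow> u b < u a \<or> (u a = u b \<and> a < b)"

definition rank :: "(nat \<Rightarrow> int) \<Rightarrow> nat set \<Rightarrow> nat \<Rightarrow> nat" where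
  "rank u B p = card {a \<in> B. prec u a p}"

lemma prec_trans: "prec u a b \<Longrightarrow> prec u b c \<Longrightarrow> prec u a c"
  unfolding prec_def by auto

lemma prec_irrefl: "\<not> prec u a a"
  unfolding prec_def by auto

lemma prec_total: "a \<noteq> b \<Longrightarrow> prec u a b \<or> prec u b a"
  unfolding prec_def by auto

lemma rank_lt:
  assumes "finite B" "a \<in> B" "prec u a b"
  shows "rank u B a < rank u B b"
proof -
  have "{x \<in> B. prec u x a} \<subset> {x \<in> B. prec u x b}"
    using assms prec_trans prec_irrefl by blast
  then show ?thesis unfolding rank_def using assms(1)
    by (simp add: psubset_card_mono)
qed

lemma rank_inj:
  assumes "finite B" "a \<in> B" "b \<in> B" "rank u B a = rank u B b"
  shows "a = b"
  using rank_lt[OF assms(1) assms(2), of u b] rank_lt[OF assms(1) assms(3), of u a]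
    prec_total[of a b u] assms(4) by fastforce

lemma rank_less_card:
  assumes "finite B" "p \<in> B"
  shows "rank u B p < card B"
proof -
  have "{x \<in> B. prec u x p} \<subset> B" using assms prec_irrefl by blast
  then show ?thesis unfolding rank_def using assms(1) by (simp add: psubset_card_mono)
qed

lemma rank_eq_card_le1:
  assumes "finite B"
  shows "card {p \<in> B. rank u B p = s} \<le> 1"
proof -
  have "\<forall>a\<in>{p \<in> B. rank u B p = s}. \<forall>b\<in>{p \<in> B. rank u B p = s}. a = b"
    using rank_inj[OF assms] by auto
  moreover have "finite {p \<in> B. rank u B p = s}" using assms by simp
  ultimately show ?thesis using card_le_Suc0_iff_eq[of "{p \<in> B. rank u B p = s}"] by simp
qed



definition blk :: "nat \<Rightarrow> nat \<Rightarrow> nat set" where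
  "blk k j = {j * 2^k ..< (j+1) * 2^k}"

definition objs :: "'a list \<Rightarrow> nat \<Rightarrow> nat \<Rightarrow> 'a set" where
  "objs xs k j = (\<lambda>p. xs ! p) ` blk k j"

definition uc :: "('q \<Rightarrow> 'a \<Rightarrow> bool) \<Rightarrow> (nat \<Rightarrow> nat) \<Rightarrow> 'a list \<Rightarrow> nat \<Rightarrow> nat \<Rightarrow> 'a \<Rightarrow> int" where
  "uc R g xs k j = (SOME c. unimax R (objs xs k j) c \<and> card (c ` objs xs k j) \<le> g (card (objs xs k j)))"

definition sz :: "nat \<Rightarrow> nat \<Rightarrow> nat \<Rightarrow> nat" where
  "sz n k j = min (2^k) (Suc n - (j+1) * 2^k)"

definition W :: "('q \<Rightarrow> 'a \<Rightarrow> bool) \<Rightarrow> (nat \<Rightarrow> nat) \<Rightarrow> 'a list \<Rightarrow> nat \<Rightarrow> nat \<Rightarrow> nat set" where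
  "W R g xs k j = {p \<in> blk k j. rank (\<lambda>p. uc R g xs k j (xs ! p)) (blk k j) p < sz (length xs) k j}"

definition lev :: "('q \<Rightarrow> 'a \<Rightarrow> bool) \<Rightarrow> (nat \<Rightarrow> nat) \<Rightarrow> 'a list \<Rightarrow> nat \<Rightarrow> nat" where
  "lev R g xs p = Max {k. p \<in> W R g xs k (p div 2^k)}"

definition col :: "('q \<Rightarrow> 'a \<Rightarrow> bool) \<Rightarrow> (nat \<Rightarrow> nat) \<Rightarrow> 'a list \<Rightarrow> nat \<Rightarrow> nat" where
  "col R g xs p = (let k = lev R g xs p; j = p div 2^k in
     prod_encode (prod_encode (k, j), int_encode (uc R g xs k j (xs ! p))))"

definition idx :: "'a list \<Rightarrow> 'a \<Rightarrow> nat" where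
  "idx xs y = (SOME p. p < length xs \<and> xs ! p = y)"

definition AA :: "('q \<Rightarrow> 'a \<Rightarrow> bool) \<Rightarrow> (nat \<Rightarrow> nat) \<Rightarrow> 'a list \<Rightarrow> 'a \<Rightarrow> nat" where
  "AA R g xs y = col R g xs (idx xs y)"

lemma idx_nth: "distinct xs \<Longrightarrow> p < length xs \<Longrightarrow> idx xs (xs ! p) = p"
  unfolding idx_def
  by (rule some_equality) (auto simp: nth_eq_iff_index_eq)

lemma finite_blk[simp]: "finite (blk k j)" by (simp add: blk_def)
lemma card_blk[simp]: "card (blk k j) = 2^k" by (simp add: blk_def algebra_simps)

lemma blk_div: "p \<in> blk k j \<Longrightarrow> p div 2^k = j"
  unfolding blk_def by (auto simp: div_nat_eqI algebra_simps)

lemma blk_div_iff: "p \<in> blk k (p div 2^k)"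
proof -
  have e: "2^k * (p div 2^k) + p mod 2^k = p" by (rule mult_div_mod_eq)
  have m: "p mod 2^k < (2::nat)^k" by simp
  have "p < 2^k + 2^k * (p div 2^k)" using e m by linarith
  then show ?thesis unfolding blk_def using e by (auto simp: algebra_simps)
qed

lemma W_sub: "W R g xs k j \<subseteq> blk k j" unfolding W_def by auto

lemma W_ne_complete: "p \<in> W R g xs k j \<Longrightarrow> (j+1) * 2^k \<le> length xs"
  unfolding W_def sz_def by auto

lemma W_lt_len: "p \<in> W R g xs k j \<Longrightarrow> p < length xs"
  using W_ne_complete[of p R g xs k j] W_sub[of R g xs k j] unfolding blk_def by auto

lemma W_full: "sz (length xs) k j = 2^k \<Longrightarrow> W R g xs k j = blk k j"
  unfolding W_def using rank_less_card[OF finite_blk] by auto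

lemma W_level_bound: "p \<in> W R g xs k j \<Longrightarrow> k < length xs"
proof -
  assume "p \<in> W R g xs k j"
  then have "(j+1) * 2^k \<le> length xs" by (rule W_ne_complete)
  moreover have "2^k \<le> (j+1) * 2^k" by simp
  moreover have "k < 2^k" by (rule less_exp)
  ultimately show ?thesis by linarith
qed

lemma W_level0: "p < length xs \<Longrightarrow> p \<in> W R g xs 0 p"
proof -
  assume a: "p < length xs"
  have "p \<in> blk 0 p" by (simp add: blk_def)
  moreover have "rank (\<lambda>i. uc R g xs 0 p (xs ! i)) (blk 0 p) p < 1"
    using rank_less_card[OF finite_blk \<open>p \<in> blk 0 p\<close>] by simp
  moreover have "sz (length xs) 0 p = 1" using a by (simp add: sz_def)
  ultimately show ?thesis unfolding W_def by simp
qed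

lemma levset_finite: "finite {k. p \<in> W R g xs k (p div 2^k)}"
  by (rule finite_subset[of _ "{..<length xs}"]) (auto dest: W_level_bound)

lemma lev_in: "p < length xs \<Longrightarrow> p \<in> W R g xs (lev R g xs p) (p div 2^(lev R g xs p))"
proof -
  assume "p < length xs"
  then have "0 \<in> {k. p \<in> W R g xs k (p div 2^k)}" using W_level0 by simp
  then have "lev R g xs p \<in> {k. p \<in> W R g xs k (p div 2^k)}"
    unfolding lev_def using levset_finite Max_in by blast
  then show ?thesis by simp
qed

lemma lev_max: "p \<in> W R g xs k (p div 2^k) \<Longrightarrow> k \<le> lev R g xs p"
  unfolding lev_def by (rule Max_ge[OF levset_finite]) simp



lemma objs_sub: "(j+1) * 2^k \<le> length xs \<Longrightarrow> objs xs k j \<subseteq> set xs"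
  unfolding objs_def blk_def by auto

lemma uc_spec:
  assumes U: "\<And>S. S \<subseteq> F \<Longrightarrow> finite S \<Longrightarrow> \<exists>c. unimax R S c \<and> card (c ` S) \<le> g (card S)"
    and F: "set xs \<subseteq> F" and c: "(j+1) * 2^k \<le> length xs"
  shows "unimax R (objs xs k j) (uc R g xs k j) \<and> card (uc R g xs k j ` objs xs k j) \<le> g (card (objs xs k j))"
proof -
  have "objs xs k j \<subseteq> F" using objs_sub[OF c] F by blast
  moreover have "finite (objs xs k j)" unfolding objs_def by simp
  ultimately have "\<exists>c. unimax R (objs xs k j) c \<and> card (c ` objs xs k j) \<le> g (card (objs xs k j))"
    using U by blast
  then show ?thesis unfolding uc_def by (rule someI_ex)
qed

lemma col_inj:
  assumes "col R g xs p = col R g xs p'"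
  shows "lev R g xs p = lev R g xs p' \<and> p div 2^(lev R g xs p) = p' div 2^(lev R g xs p')
    \<and> uc R g xs (lev R g xs p) (p div 2^(lev R g xs p)) (xs ! p) = uc R g xs (lev R g xs p') (p' div 2^(lev R g xs p')) (xs ! p')"
  using assms unfolding col_def Let_def
  using inj_prod_encode[of UNIV] inj_int_encode[of UNIV] unfolding inj_on_def by blast

lemma conflict_free_AA:
  assumes U: "\<And>S. S \<subseteq> F \<Longrightarrow> finite S \<Longrightarrow> \<exists>c. unimax R S c \<and> card (c ` S) \<le> g (card S)"
    and F: "set xs \<subseteq> F" and D: "distinct xs"
  shows "conflict_free R (set xs) (AA R g xs)"
  unfolding conflict_free_def
proof (intro allI impI)
  fix q
  assume ne: "rel_set R (set xs) q \<noteq> {}"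
  define P where "P = {p. p < length xs \<and> R q (xs ! p)}"
  obtain p1 where p1: "p1 \<in> P"
    using ne unfolding rel_set_def P_def by (auto simp: in_set_conv_nth)
  define KS where "KS = {k. \<exists>p\<in>P. p \<in> W R g xs k (p div 2^k)}"
  have KSf: "finite KS" unfolding KS_def
    by (rule finite_subset[of _ "{..<length xs}"]) (auto dest: W_level_bound)
  have "0 \<in> KS" unfolding KS_def using p1 W_level0 unfolding P_def by fastforce
  then have "Max KS \<in> KS" using KSf Max_in by blast
  then obtain p0 where p0: "p0 \<in> P" "p0 \<in> W R g xs (Max KS) (p0 div 2^(Max KS))"
    unfolding KS_def by blast
  define k where "k = Max KS"
  define j where "j = p0 div 2^k"
  have kmax: "\<And>p k'. p \<in> P \<Longrightarrow> p \<in> W R g xs k' (p div 2^k') \<Longrightarrow> k' \<le> k"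
    unfolding k_def using KSf KS_def Max_ge by blast
  have levk: "lev R g xs p = k" if "p \<in> P" "p \<in> W R g xs k j" for p
  proof -
    have "p div 2^k = j" using that W_sub blk_div by blast
    then have "p \<in> W R g xs k (p div 2^k)" using that by simp
    then have "k \<le> lev R g xs p" by (rule lev_max)
    moreover have "lev R g xs p \<le> k"
      using kmax[OF that(1) lev_in] that(1) unfolding P_def by blast
    ultimately show ?thesis by simp
  qed
  have cpl: "(j+1) * 2^k \<le> length xs" using p0 W_ne_complete unfolding k_def j_def by blast
  define S where "S = objs xs k j"
  define u where "u = uc R g xs k j"
  have um: "unimax R S u" using uc_spec[OF U F cpl] unfolding S_def u_def by blast
  have p0W: "p0 \<in> W R g xs k j" using p0 unfolding k_def j_def by simp
  have p0S: "xs ! p0 \<in> rel_set R S q"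
    using p0W W_sub[of R g xs k j] p0(1) unfolding S_def objs_def rel_set_def P_def by auto
  then obtain s where s: "s \<in> rel_set R S q" "u s = Max (u ` rel_set R S q)"
    and suniq: "\<And>t. t \<in> rel_set R S q \<Longrightarrow> u t = Max (u ` rel_set R S q) \<Longrightarrow> t = s"
    using um unfolding unimax_def by blast
  have finQ: "finite (rel_set R S q)" unfolding rel_set_def S_def objs_def by simp
  obtain ps where ps: "ps \<in> blk k j" "xs ! ps = s"
    using s(1) unfolding rel_set_def S_def objs_def by auto
  have psP: "ps \<in> P" using s(1) ps cpl unfolding rel_set_def P_def blk_def by auto
  have "ps \<in> W R g xs k j"
  proof (cases "u (xs ! p0) < u s")
    case True
    then have "prec (\<lambda>i. u (xs ! i)) ps p0" unfolding prec_def using ps by simp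
    then have "rank (\<lambda>i. u (xs ! i)) (blk k j) ps < rank (\<lambda>i. u (xs ! i)) (blk k j) p0"
      using rank_lt[OF finite_blk ps(1)] by blast
    then show ?thesis using p0W ps(1) unfolding W_def u_def by auto
  next
    case False
    have "u (xs ! p0) \<le> u s" using s(2) p0S finQ by simp
    then have "u (xs ! p0) = Max (u ` rel_set R S q)" using False s(2) by simp
    then have "xs ! p0 = s" using suniq p0S by blast
    moreover have "ps < length xs" "p0 < length xs" using psP p0(1) unfolding P_def by auto
    ultimately have "p0 = ps" using D ps(2) nth_eq_iff_index_eq by metis
    then show ?thesis using p0W by simp
  qed
  then have levps: "lev R g xs ps = k" "ps div 2^k = j" using levk psP blk_div ps(1) by auto
  show "\<exists>s\<in>rel_set R (set xs) q. \<forall>t\<in>rel_set R (set xs) q. t \<noteq> s \<longrightarrow> AA R g xs t \<noteq> AA R g xs s"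
  proof (intro bexI ballI impI)
    show "s \<in> rel_set R (set xs) q" using psP ps unfolding P_def rel_set_def by auto
  next
    fix t assume t: "t \<in> rel_set R (set xs) q" "t \<noteq> s"
    show "AA R g xs t \<noteq> AA R g xs s"
    proof
      assume eq: "AA R g xs t = AA R g xs s"
      obtain pt where pt: "pt < length xs" "xs ! pt = t" using t(1) unfolding rel_set_def by (auto simp: in_set_conv_nth)
      have ptP: "pt \<in> P" using pt t(1) unfolding P_def rel_set_def by auto
      have "col R g xs pt = col R g xs ps"
        using eq idx_nth[OF D] pt psP ps(2) unfolding AA_def P_def by auto
      note ci = col_inj[OF this]
      have lt: "lev R g xs pt = k" "pt div 2^k = j" using ci levps by auto
      have "u t = u s" using ci levps lt pt ps unfolding u_def by auto
      have "pt \<in> W R g xs k j" using lev_in[OF pt(1), of R g] lt by simp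
      then have "pt \<in> blk k j" using W_sub by blast
      then have "t \<in> rel_set R S q" using pt t(1) unfolding S_def objs_def rel_set_def by auto
      then have "t = s" using suniq \<open>u t = u s\<close> s(2) by simp
      then show False using t(2) by simp
    qed
  qed
qed



lemma objs_app: "(j+1) * 2^k \<le> length xs \<Longrightarrow> objs (xs @ [x]) k j = objs xs k j"
  unfolding objs_def blk_def by (auto simp: nth_append)

lemma uc_app: "(j+1) * 2^k \<le> length xs \<Longrightarrow> uc R g (xs @ [x]) k j = uc R g xs k j"
  unfolding uc_def by (simp only: objs_app)

lemma rank_app: "(j+1) * 2^k \<le> length xs \<Longrightarrow> p \<in> blk k j \<Longrightarrow>
  rank (\<lambda>i. uc R g (xs @ [x]) k j ((xs @ [x]) ! i)) (blk k j) p = rank (\<lambda>i. uc R g xs k j (xs ! i)) (blk k j) p"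
proof -
  assume c: "(j+1) * 2^k \<le> length xs" and "p \<in> blk k j"
  have "\<forall>i\<in>blk k j. uc R g (xs @ [x]) k j ((xs @ [x]) ! i) = uc R g xs k j (xs ! i)"
    using c uc_app[OF c, where R=R and g=g and x=x] unfolding blk_def by (auto simp: nth_append)
  then have "{a \<in> blk k j. prec (\<lambda>i. uc R g (xs @ [x]) k j ((xs @ [x]) ! i)) a p}
     = {a \<in> blk k j. prec (\<lambda>i. uc R g xs k j (xs ! i)) a p}"
    using \<open>p \<in> blk k j\<close> unfolding prec_def by auto
  then show ?thesis unfolding rank_def by simp
qed

lemma W_app_same:
  assumes "j \<noteq> Suc (length xs) div 2^k - 1"
  shows "W R g (xs @ [x]) k j = W R g xs k j"
proof (cases "(j+1) * 2^k \<le> length xs")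
  case True
  have "sz (Suc (length xs)) k j = sz (length xs) k j"
  proof (rule ccontr)
    assume "sz (Suc (length xs)) k j \<noteq> sz (length xs) k j"
    then have "Suc (length xs) < (j+1) * 2^k + 2^k" unfolding sz_def by auto
    then have "Suc (length xs) div 2^k = j + 1" using True
      by (intro div_nat_eqI) (auto simp: algebra_simps)
    then show False using assms by simp
  qed
  moreover have "rank (\<lambda>i. uc R g (xs @ [x]) k j ((xs @ [x]) ! i)) (blk k j) p = rank (\<lambda>i. uc R g xs k j (xs ! i)) (blk k j) p"
    if "p \<in> blk k j" for p using rank_app[OF True that, where R=R and g=g and x=x] .
  ultimately show ?thesis unfolding W_def by auto
next
  case False
  have "sz (Suc (length xs)) k j = 0"
  proof (rule ccontr)
    assume "sz (Suc (length xs)) k j \<noteq> 0"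
    then have "(j+1) * 2^k = Suc (length xs)" using False unfolding sz_def by auto
    then have "Suc (length xs) div 2^k = (j+1) * 2^k div 2^k" by simp
    also have "\<dots> = j + 1" by simp
    finally have "Suc (length xs) div 2^k = j + 1" .
    then show False using assms by simp
  qed
  moreover have "sz (length xs) k j = 0" using False unfolding sz_def by auto
  ultimately show ?thesis unfolding W_def by simp
qed

lemma W_app_mono: "W R g xs k j \<subseteq> W R g (xs @ [x]) k j"
proof
  fix p assume p: "p \<in> W R g xs k j"
  then have c: "(j+1) * 2^k \<le> length xs" by (rule W_ne_complete)
  have "p \<in> blk k j" using p W_sub by blast
  moreover have "sz (length xs) k j \<le> sz (length (xs @ [x])) k j" unfolding sz_def by auto
  moreover note r = rank_app[OF c \<open>p \<in> blk k j\<close>, where R=R and g=g and x=x]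
  ultimately show "p \<in> W R g (xs @ [x]) k j" using p unfolding W_def by auto
qed

definition Dif :: "('q \<Rightarrow> 'a \<Rightarrow> bool) \<Rightarrow> (nat \<Rightarrow> nat) \<Rightarrow> 'a list \<Rightarrow> 'a \<Rightarrow> nat \<Rightarrow> nat set" where
  "Dif R g xs x k = W R g (xs @ [x]) k (Suc (length xs) div 2^k - 1) - W R g xs k (Suc (length xs) div 2^k - 1)"

lemma W_app_iff:
  "p \<in> W R g (xs @ [x]) k j \<longleftrightarrow> p \<in> W R g xs k j \<or> (j = Suc (length xs) div 2^k - 1 \<and> p \<in> Dif R g xs x k)"
  unfolding Dif_def using W_app_same[of j xs k R g x] W_app_mono[of R g xs k j x] by auto

lemma Dif_small:
  assumes "p < length xs" "p \<in> Dif R g xs x k"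
  shows "1 \<le> k \<and> 2^k \<le> Suc (length xs)"
proof (rule ccontr)
  assume "\<not> (1 \<le> k \<and> 2^k \<le> Suc (length xs))"
  then consider "k = 0" | "Suc (length xs) < 2^k" by linarith
  then show False
  proof cases
    case 1
    then have "p \<in> blk 0 (length xs)" using assms(2) W_sub unfolding Dif_def by fastforce
    then show False using assms(1) unfolding blk_def by simp
  next
    case 2
    then have "Suc (length xs) div 2^k - 1 = 0" by simp
    then have "p \<in> W R g (xs @ [x]) k 0" using assms(2) unfolding Dif_def by simp
    then have "2^k \<le> Suc (length xs)" using W_ne_complete by fastforce
    then show False using 2 by simp
  qed
qed

lemma Dif_card: "card (Dif R g xs x k) \<le> 1"
proof -
  define j where "j = Suc (length xs) div 2^k - 1"
  define r where "r = rank (\<lambda>i. uc R g (xs @ [x]) k j ((xs @ [x]) ! i)) (blk k j)"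
  have "Dif R g xs x k \<subseteq> {p \<in> blk k j. r p = sz (length xs) k j}"
  proof
    fix p assume p: "p \<in> Dif R g xs x k"
    then have pW: "p \<in> W R g (xs @ [x]) k j" "p \<notin> W R g xs k j" unfolding Dif_def j_def by auto
    then have pb: "p \<in> blk k j" using W_sub by blast
    have lt: "r p < sz (Suc (length xs)) k j" using pW(1) unfolding W_def r_def by simp
    have le1: "sz (Suc (length xs)) k j \<le> Suc (sz (length xs) k j)" unfolding sz_def by auto
    have "sz (length xs) k j \<le> r p"
    proof (cases "(j+1) * 2^k \<le> length xs")
      case True
      then show ?thesis using pW(2) pb rank_app[OF True pb, where R=R and g=g and x=x] unfolding W_def r_def by auto
    next
      case False
      then show ?thesis unfolding sz_def by auto
    qed
    then show "p \<in> {p \<in> blk k j. r p = sz (length xs) k j}" using lt le1 pb by auto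
  qed
  then have "card (Dif R g xs x k) \<le> card {p \<in> blk k j. r p = sz (length xs) k j}"
    by (rule card_mono[rotated]) simp
  also have "\<dots> \<le> 1" unfolding r_def by (rule rank_eq_card_le1[OF finite_blk])
  finally show ?thesis .
qed

lemma col_app:
  assumes "p < length xs" "p \<notin> (\<Union>k\<in>{k. 1 \<le> k \<and> 2^k \<le> Suc (length xs)}. Dif R g xs x k)"
  shows "col R g (xs @ [x]) p = col R g xs p"
proof -
  have eqW: "p \<in> W R g (xs @ [x]) k (p div 2^k) \<longleftrightarrow> p \<in> W R g xs k (p div 2^k)" for k
    using W_app_iff[of p R g xs x k "p div 2^k"] Dif_small[OF assms(1)] assms(2) by blast
  have levE: "lev R g (xs @ [x]) p = lev R g xs p" unfolding lev_def using eqW by simp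
  define k where "k = lev R g xs p"
  have "p \<in> W R g xs k (p div 2^k)" using lev_in[OF assms(1)] unfolding k_def by blast
  then have c: "(p div 2^k + 1) * 2^k \<le> length xs" using W_ne_complete by blast
  show ?thesis unfolding col_def Let_def levE k_def[symmetric] using uc_app[OF c, where R=R and g=g and x=x] assms(1)
    by (simp add: nth_append)
qed

lemma card_K: "real (card {k. 1 \<le> k \<and> 2^k \<le> Suc n}) \<le> \<lceil>log 2 (real (n + 1))\<rceil>"
proof -
  define c where "c = \<lceil>log 2 (real (n + 1))\<rceil>"
  define m where "m = nat c"
  have lg: "0 \<le> log 2 (real (n + 1))" by simp
  have c0: "0 \<le> c" unfolding c_def zero_le_ceiling using lg by linarith
  have "{k. 1 \<le> k \<and> 2^k \<le> Suc n} \<subseteq> {1..m}"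
  proof
    fix k assume "k \<in> {k. 1 \<le> k \<and> 2^k \<le> Suc n}"
    then have k: "1 \<le> k" "2^k \<le> Suc n" by auto
    have "real k \<le> log 2 (real (Suc n))" using le_log2_of_power[OF k(2)] by simp
    also have "\<dots> \<le> of_int c" unfolding c_def by (simp add: le_of_int_ceiling del: of_nat_Suc)
    finally have "real k \<le> of_int c" .
    then have "int k \<le> c" by linarith
    then have "k \<le> m" unfolding m_def by (simp add: le_nat_iff)
    then show "k \<in> {1..m}" using k by simp
  qed
  then have "card {k. 1 \<le> k \<and> 2^k \<le> Suc n} \<le> card {1..m}" by (rule card_mono[rotated]) simp
  then have "card {k. 1 \<le> k \<and> 2^k \<le> Suc n} \<le> m" by simp
  then have "real (card {k. 1 \<le> k \<and> 2^k \<le> Suc n}) \<le> real m" by (rule of_nat_mono)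
  also have "real m = of_int c" unfolding m_def using c0 by simp
  finally show ?thesis unfolding c_def .
qed

lemma recol_AA:
  assumes D: "distinct xs" and x: "x \<notin> set xs"
  shows "real (recolorings xs (AA R g xs) (AA R g (xs @ [x]))) \<le> \<lceil>log 2 (real (length xs + 1))\<rceil>"
proof -
  define K where "K = {k. 1 \<le> k \<and> 2^k \<le> Suc (length xs)}"
  have D2: "distinct (xs @ [x])" using D x by simp
  have "K \<subseteq> {..Suc (length xs)}"
  proof
    fix k assume "k \<in> K"
    then have "2^k \<le> Suc (length xs)" unfolding K_def by simp
    moreover have "k < 2^k" by (rule less_exp)
    ultimately show "k \<in> {..Suc (length xs)}" unfolding atMost_iff by linarith
  qed
  then have finK: "finite K" using finite_subset by blast
  have sub: "{y \<in> set xs. AA R g (xs @ [x]) y \<noteq> AA R g xs y} \<subseteq> (\<lambda>p. xs ! p) ` (\<Union>k\<in>K. Dif R g xs x k)"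
  proof
    fix y assume y: "y \<in> {y \<in> set xs. AA R g (xs @ [x]) y \<noteq> AA R g xs y}"
    then obtain p where p: "p < length xs" "xs ! p = y" by (auto simp: in_set_conv_nth)
    have "idx (xs @ [x]) y = p" using idx_nth[OF D2, of p] p by (simp add: nth_append)
    moreover have "idx xs y = p" using idx_nth[OF D p(1)] p by simp
    ultimately have "col R g (xs @ [x]) p \<noteq> col R g xs p" using y unfolding AA_def by simp
    then have "p \<in> (\<Union>k\<in>K. Dif R g xs x k)" using col_app[OF p(1)] unfolding K_def by blast
    then show "y \<in> (\<lambda>p. xs ! p) ` (\<Union>k\<in>K. Dif R g xs x k)" using p by blast
  qed
  have finD: "finite (Dif R g xs x k)" for k
    unfolding Dif_def by (rule finite_Diff, rule finite_subset[OF W_sub finite_blk])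
  have "card {y \<in> set xs. AA R g (xs @ [x]) y \<noteq> AA R g xs y} \<le> card ((\<lambda>p. xs ! p) ` (\<Union>k\<in>K. Dif R g xs x k))"
    using sub finK finD by (intro card_mono) auto
  also have "\<dots> \<le> card (\<Union>k\<in>K. Dif R g xs x k)" by (rule card_image_le) (use finK finD in auto)
  also have "\<dots> \<le> (\<Sum>k\<in>K. card (Dif R g xs x k))" by (rule card_UN_le[OF finK])
  also have "\<dots> \<le> (\<Sum>k\<in>K. 1)" by (rule sum_mono) (rule Dif_card)
  also have "\<dots> = card K" by simp
  finally have "card {y \<in> set xs. AA R g (xs @ [x]) y \<noteq> AA R g xs y} \<le> card K" .
  then have "real (card {y \<in> set xs. AA R g (xs @ [x]) y \<noteq> AA R g xs y}) \<le> real (card K)" by (rule of_nat_mono)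
  moreover have "real (card K) \<le> \<lceil>log 2 (real (length xs + 1))\<rceil>" unfolding K_def by (rule card_K)
  ultimately show ?thesis unfolding recolorings_def by (rule order_trans)
qed



lemma window:
  fixes R :: "'q \<Rightarrow> 'a \<Rightarrow> bool" and g :: "nat \<Rightarrow> nat" and xs :: "'a list"
  assumes p: "p < length xs"
  defines "k \<equiv> lev R g xs p" and "j \<equiv> p div 2^(lev R g xs p)"
  shows "2^k \<le> length xs \<and> j < length xs div 2^k \<and> length xs div 2^k < j + 4"
proof -
  let ?n = "length xs"
  have pW: "p \<in> W R g xs k j" using lev_in[OF p] unfolding k_def j_def by blast
  have c: "(j+1) * 2^k \<le> ?n" using W_ne_complete[OF pW] .
  have jd: "j + 1 \<le> ?n div 2^k" using c by (simp add: less_eq_div_iff_mult_less_eq)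
  have nW: "p \<notin> W R g xs (k+1) (p div 2^(k+1))"
  proof
    assume "p \<in> W R g xs (k+1) (p div 2^(k+1))"
    then have "k + 1 \<le> lev R g xs p" by (rule lev_max)
    then show False unfolding k_def by simp
  qed
  have "p div 2^(k+1) = p div (2^k * 2)" by (simp add: mult.commute)
  also have "\<dots> = p div 2^k div 2" by (rule div_mult2_eq)
  finally have pd: "p div 2^(k+1) = j div 2" unfolding j_def k_def .
  have "sz ?n (k+1) (j div 2) \<noteq> 2^(k+1)"
  proof
    assume "sz ?n (k+1) (j div 2) = 2^(k+1)"
    then have "W R g xs (k+1) (j div 2) = blk (k+1) (j div 2)" by (rule W_full)
    then show False using nW blk_div_iff[of p "k+1"] pd by simp
  qed
  then have "Suc ?n - (j div 2 + 1) * 2^(k+1) < 2^(k+1)" unfolding sz_def by auto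
  then have "Suc ?n < (j div 2 + 2) * 2^(k+1)" by (simp add: algebra_simps)
  moreover have "(j div 2 + 2) * 2^(k+1) \<le> (j + 4) * 2^k"
  proof -
    have "j div 2 * 2 \<le> j" by simp
    then have "(j div 2 + 2) * 2 \<le> j + 4" by (simp add: add_mult_distrib)
    then have "(j div 2 + 2) * 2 * 2^k \<le> (j + 4) * 2^k" by (rule mult_right_mono) simp
    then show ?thesis by (simp add: algebra_simps)
  qed
  ultimately have "?n < (j + 4) * 2^k" by linarith
  then have "?n div 2^k < j + 4" by (rule less_mult_imp_div_less)
  moreover have "2^k \<le> ?n" using c by (metis le_add2 mult_le_mono1 order_trans mult.commute mult_1 Suc_eq_plus1 add.commute)
  ultimately show ?thesis using jd by simp
qed

lemma colors_AA:
  assumes U: "\<And>S. S \<subseteq> F \<Longrightarrow> finite S \<Longrightarrow> \<exists>c. unimax R S c \<and> card (c ` S) \<le> g (card S)"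
    and M: "mono g" and F: "set xs \<subseteq> F" and D: "distinct xs" and n2: "2 \<le> length xs"
  shows "real (card (AA R g xs ` set xs)) \<le> 8 * real (g (length xs)) * (log 2 (length xs))\<^sup>2"
proof -
  define n where "n = length xs"
  define Kc where "Kc = {k. 2^k \<le> n}"
  define Wn where "Wn = (\<lambda>k. {j. j < n div 2^k \<and> n div 2^k < j + 4})"
  define f where "f = (\<lambda>k j v. prod_encode (prod_encode (k, j), int_encode v))"
  define m where "m = nat \<lfloor>log 2 n\<rfloor>"
  define h where "h = (\<lambda>kj. f (fst kj) (snd kj) ` (uc R g xs (fst kj) (snd kj) ` objs xs (fst kj) (snd kj)))"
  have Kcsub: "Kc \<subseteq> {..m}"
  proof
    fix k assume "k \<in> Kc"
    then have "2^k \<le> n" unfolding Kc_def by simp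
    then have "real k \<le> log 2 n" by (rule le_log2_of_power)
    then show "k \<in> {..m}" unfolding m_def by (simp add: le_nat_floor)
  qed
  have finKc: "finite Kc" using Kcsub finite_subset by blast
  have Wnsub: "Wn k \<subseteq> {n div 2^k - 4 ..< n div 2^k}" for k unfolding Wn_def by auto
  have finWn: "finite (Wn k)" for k using Wnsub finite_subset by blast
  have cardWn: "card (Wn k) \<le> 4" for k
  proof -
    have "card (Wn k) \<le> card {n div 2^k - 4 ..< n div 2^k}" by (rule card_mono[OF _ Wnsub]) simp
    then show ?thesis by simp
  qed
  have img: "AA R g xs ` set xs \<subseteq> (\<Union>kj\<in>Sigma Kc Wn. h kj)"
  proof
    fix y assume "y \<in> AA R g xs ` set xs"
    then obtain p where p: "p < n" "y = AA R g xs (xs ! p)" unfolding n_def by (auto simp: in_set_conv_nth)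
    then have y: "y = col R g xs p" using idx_nth[OF D] unfolding AA_def n_def by simp
    define k where "k = lev R g xs p"
    define j where "j = p div 2^k"
    have w: "2^k \<le> n \<and> j < n div 2^k \<and> n div 2^k < j + 4"
      using window[of p xs R g] p unfolding k_def j_def n_def by simp
    have "p \<in> blk k j" unfolding j_def by (rule blk_div_iff)
    then have "xs ! p \<in> objs xs k j" unfolding objs_def by simp
    moreover have "y = f k j (uc R g xs k j (xs ! p))" unfolding y col_def Let_def f_def k_def j_def by simp
    moreover have "(k, j) \<in> Sigma Kc Wn" using w unfolding Kc_def Wn_def by simp
    ultimately have "y \<in> h (k, j)" unfolding h_def by simp
    then show "y \<in> (\<Union>kj\<in>Sigma Kc Wn. h kj)" using \<open>(k, j) \<in> Sigma Kc Wn\<close> by blast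
  qed
  have finS: "finite (Sigma Kc Wn)" using finKc finWn by simp
  have each: "card (h (k,j)) \<le> g n" if "(k, j) \<in> Sigma Kc Wn" for k j
  proof -
    have "j + 1 \<le> n div 2^k" using that unfolding Wn_def by simp
    then have c: "(j+1) * 2^k \<le> length xs" unfolding n_def by (simp add: less_eq_div_iff_mult_less_eq)
    have "card (f k j ` (uc R g xs k j ` objs xs k j)) \<le> card (uc R g xs k j ` objs xs k j)"
      by (rule card_image_le) (simp add: objs_def)
    also have "\<dots> \<le> g (card (objs xs k j))" using uc_spec[OF U F c] by blast
    also have "\<dots> \<le> g n"
    proof -
      have "card (objs xs k j) \<le> card (blk k j)" unfolding objs_def by (rule card_image_le) simp
      also have "\<dots> \<le> n" using that unfolding Kc_def by simp
      finally show ?thesis using M by (simp add: monoD)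
    qed
    finally show ?thesis unfolding h_def by simp
  qed
  have "card (AA R g xs ` set xs) \<le> card (\<Union>kj\<in>Sigma Kc Wn. h kj)"
    by (rule card_mono[OF _ img]) (use finS in \<open>auto simp: objs_def h_def\<close>)
  also have "\<dots> \<le> (\<Sum>kj\<in>Sigma Kc Wn. card (h kj))"
    by (rule card_UN_le[OF finS])
  also have "\<dots> \<le> (\<Sum>kj\<in>Sigma Kc Wn. g n)" by (rule sum_mono) (use each in auto)
  also have "\<dots> = card (Sigma Kc Wn) * g n" by simp
  also have "card (Sigma Kc Wn) = (\<Sum>k\<in>Kc. card (Wn k))" using finKc finWn by simp
  also have "\<dots> \<le> (\<Sum>k\<in>Kc. 4)" by (rule sum_mono) (rule cardWn)
  also have "\<dots> = 4 * card Kc" by simp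
  also have "card Kc \<le> card {..m}" by (rule card_mono[OF _ Kcsub]) simp
  also have "card {..m} = m + 1" by simp
  finally have A: "card (AA R g xs ` set xs) \<le> 4 * (m + 1) * g n" by (simp add: mult_right_mono)
  have L1: "1 \<le> log 2 n" using le_log2_of_power[of 1 "length xs"] n2 unfolding n_def by simp
  have Lm: "real m \<le> log 2 n" unfolding m_def using L1 by simp
  have "real (card (AA R g xs ` set xs)) \<le> 4 * (real m + 1) * real (g n)"
  proof -
    have "real (card (AA R g xs ` set xs)) \<le> real (4 * (m + 1) * g n)" using A by (rule of_nat_mono)
    then show ?thesis by (simp add: add.commute)
  qed
  also have "\<dots> \<le> 4 * (2 * log 2 n) * real (g n)"
    by (rule mult_right_mono) (use Lm L1 in auto)
  also have "\<dots> \<le> 4 * (2 * (log 2 n)\<^sup>2) * real (g n)"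
  proof -
    have "log 2 n \<le> (log 2 n)\<^sup>2" using L1 by (simp add: power2_eq_square)
    then show ?thesis by (intro mult_right_mono) auto
  qed
  finally show ?thesis unfolding n_def by (simp add: algebra_simps)
qed


theorem mainTheorem7:
  fixes R :: "'q \<Rightarrow> 'a \<Rightarrow> bool"
    and F :: "'a set"
    and \<gamma> :: "nat \<Rightarrow> nat"
  assumes mono_\<gamma>: "mono \<gamma>"
    and unimax_F: "\<And>S. S \<subseteq> F \<Longrightarrow> finite S \<Longrightarrow>
          \<exists>c. unimax R S c \<and> card (c ` S) \<le> \<gamma> (card S)"
  shows "\<exists>(A :: 'a list \<Rightarrow> 'a \<Rightarrow> nat) (C :: real) (N :: nat).
     \<forall>xs. distinct xs \<and> set xs \<subseteq> F \<longrightarrow>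
        conflict_free R (set xs) (A xs)
      \<and> (length xs \<ge> N \<longrightarrow>
           real (card (A xs ` set xs)) \<le> C * real (\<gamma> (length xs)) * (log 2 (length xs))\<^sup>2)
      \<and> (\<forall>x. x \<in> F \<and> x \<notin> set xs \<longrightarrow>
           real (recolorings xs (A xs) (A (xs @ [x]))) \<le> \<lceil>log 2 (real (length xs + 1))\<rceil>)"
proof (rule exI[of _ "AA R \<gamma>"], rule exI[of _ 8], rule exI[of _ 2], intro allI impI conjI)
  fix xs :: "'a list" assume a: "distinct xs \<and> set xs \<subseteq> F"
  show "conflict_free R (set xs) (AA R \<gamma> xs)"
    using conflict_free_AA[OF unimax_F, where xs=xs] a by simp
  show "real (card (AA R \<gamma> xs ` set xs)) \<le> 8 * real (\<gamma> (length xs)) * (log 2 (length xs))\<^sup>2"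
    if "length xs \<ge> 2" using colors_AA[OF unimax_F mono_\<gamma>, where xs=xs] a that by simp
  show "real (recolorings xs (AA R \<gamma> xs) (AA R \<gamma> (xs @ [x]))) \<le> \<lceil>log 2 (real (length xs + 1))\<rceil>"
    if "x \<in> F \<and> x \<notin> set xs" for x
    using recol_AA[where xs=xs and R=R and g=\<gamma> and x=x] a that by blast
qed

end
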